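(* Let $G$ be a group with finite generating set $Y$ and let $\mathscr S$ be a retractive family of subsets of $Y$. Then the kernel of $\rho_{\mathscr S}=\prod_{S\in\mathscr S}\rho_S\colon G\to\prod_{S\in\mathscr S}G_S$ is generated by monic commutators whose support is transverse to $\mathscr S$.
   Context: Conventions: $[x,y]=x^{-1}y^{-1}xy$. For $S\subseteq Y$, $G_S$ is the quotient of $G$ by the normal closure of $Y-S$, and $\rho_S\colon G\to G_S$ is the projection. $S$ is retractive if $\rho_S$ restricts to an injection on the subgroup $\langle S\rangle$ ($\emptyset$ is retractive by convention). A retractive family is a family of retractive subsets of $Y$ all of whose intersections are also retractive. The support of $q\in G$ relative to $\mathscr S$ is $\bigcap\{S\in\mathscr S: q\in\langle S\rangle\}$. Monic commutators: for $x\in Y$, $x$ and $x^{-1}$ are monic commutators; if $x,y$ are monic commutators then so is $[x,y]$. A subset $T\subseteq Y$ is transverse to $\mathscr S$ if $T\not\subseteq S$ for every $S\in\mathscr S$. *)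

theory Defs
  imports "HOL-Algebra.Algebra"
begin

definition normal_closure :: "('a, 'b) monoid_scheme \<Rightarrow> 'a set \<Rightarrow> 'a set" where
  "normal_closure G A =
     generate G (\<Union>g\<in>carrier G. (\<lambda>a. inv\<^bsub>G\<^esub> g \<otimes>\<^bsub>G\<^esub> a \<otimes>\<^bsub>G\<^esub> g) ` A)"

definition quotS :: "('a, 'b) monoid_scheme \<Rightarrow> 'a set \<Rightarrow> 'a set \<Rightarrow> 'a set monoid" where
  "quotS G Y S = G Mod (normal_closure G (Y - S))"

definition rhoS :: "('a, 'b) monoid_scheme \<Rightarrow> 'a set \<Rightarrow> 'a set \<Rightarrow> 'a \<Rightarrow> 'a set" where
  "rhoS G Y S = (\<lambda>g. normal_closure G (Y - S) #>\<^bsub>G\<^esub> g)"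

definition retractive :: "('a, 'b) monoid_scheme \<Rightarrow> 'a set \<Rightarrow> 'a set \<Rightarrow> bool" where
  "retractive G Y S \<longleftrightarrow> S \<subseteq> Y \<and> (S = {} \<or> inj_on (rhoS G Y S) (generate G S))"

definition retractive_family :: "('a, 'b) monoid_scheme \<Rightarrow> 'a set \<Rightarrow> 'a set set \<Rightarrow> bool" where
  "retractive_family G Y F \<longleftrightarrow>
     (\<forall>S\<in>F. retractive G Y S) \<and> (\<forall>T. T \<subseteq> F \<and> T \<noteq> {} \<longrightarrow> retractive G Y (\<Inter>T))"

definition support :: "('a, 'b) monoid_scheme \<Rightarrow> 'a set \<Rightarrow> 'a set set \<Rightarrow> 'a \<Rightarrow> 'a set" where
  "support G Y F q = {y\<in>Y. \<forall>S\<in>F. q \<in> generate G S \<longrightarrow> y \<in> S}"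

definition transverse :: "'a set set \<Rightarrow> 'a set \<Rightarrow> bool" where
  "transverse F T \<longleftrightarrow> (\<forall>S\<in>F. \<not> T \<subseteq> S)"

definition commutator :: "('a, 'b) monoid_scheme \<Rightarrow> 'a \<Rightarrow> 'a \<Rightarrow> 'a" where
  "commutator G x y = inv\<^bsub>G\<^esub> x \<otimes>\<^bsub>G\<^esub> inv\<^bsub>G\<^esub> y \<otimes>\<^bsub>G\<^esub> x \<otimes>\<^bsub>G\<^esub> y"

inductive_set monic_comm :: "('a, 'b) monoid_scheme \<Rightarrow> 'a set \<Rightarrow> 'a set"
  for G :: "('a, 'b) monoid_scheme" and Y :: "'a set" where
  gen: "x \<in> Y \<Longrightarrow> x \<in> monic_comm G Y"
| gen_inv: "x \<in> Y \<Longrightarrow> inv\<^bsub>G\<^esub> x \<in> monic_comm G Y"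
| comm: "x \<in> monic_comm G Y \<Longrightarrow> y \<in> monic_comm G Y \<Longrightarrow> commutator G x y \<in> monic_comm G Y"

definition rho_family :: "('a, 'b) monoid_scheme \<Rightarrow> 'a set \<Rightarrow> 'a set set \<Rightarrow> 'a \<Rightarrow> 'a set \<Rightarrow> 'a set" where
  "rho_family G Y F = (\<lambda>g. \<lambda>S\<in>F. rhoS G Y S g)"

end

theory Submission
  imports Defs
begin

context group
begin

lemma conj_closure_gen:
  assumes A: "A \<subseteq> carrier G" and x: "x \<in> carrier G"
    and c: "\<And>a. a \<in> A \<Longrightarrow> x \<otimes> a \<otimes> inv x \<in> generate G A"
    and l: "l \<in> generate G A"
  shows "x \<otimes> l \<otimes> inv x \<in> generate G A"
  using l
proof (induct l rule: generate.induct)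
  case one thus ?case using x generate.one by auto
next
  case (incl h) thus ?case using c by auto
next
  case (inv h)
  hence h: "h \<in> carrier G" using A by auto
  hence "inv (x \<otimes> h \<otimes> (inv x)) = x \<otimes> (inv h) \<otimes> (inv x)"
    using x by (simp add: inv_mult_group m_assoc)
  thus ?case
    using generate_m_inv_closed[OF A c[OF inv]] by simp
next
  case (eng h1 h2)
  note in_carrier = eng(1,3)[THEN generate_in_carrier[OF A]]
  have "x \<otimes> (h1 \<otimes> h2) \<otimes> inv x = (x \<otimes> h1 \<otimes> inv x) \<otimes> (x \<otimes> h2 \<otimes> inv x)"
    using in_carrier x by (simp add: inv_solve_left m_assoc)
  thus ?case
    using generate.eng[OF eng(2,4)] by simp
qed

lemma conj_gen_normal:
  assumes A: "A \<subseteq> carrier G" and Y: "Y \<subseteq> carrier G" and gY: "generate G Y = carrier G"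
    and c1: "\<And>y a. y \<in> Y \<Longrightarrow> a \<in> A \<Longrightarrow> y \<otimes> a \<otimes> inv y \<in> generate G A"
    and c2: "\<And>y a. y \<in> Y \<Longrightarrow> a \<in> A \<Longrightarrow> inv y \<otimes> a \<otimes> y \<in> generate G A"
  shows "generate G A \<lhd> G"
proof -
  have main: "\<forall>a\<in>A. g \<otimes> a \<otimes> inv g \<in> generate G A \<and> inv g \<otimes> a \<otimes> g \<in> generate G A"
    if g: "g \<in> generate G Y" for g
    using g
  proof (induct g rule: generate.induct)
    case one show ?case
    proof
      fix a assume a: "a \<in> A"
      then have "a \<in> carrier G" using A by auto
      then show "\<one> \<otimes> a \<otimes> inv \<one> \<in> generate G A \<and> inv \<one> \<otimes> a \<otimes> \<one> \<in> generate G A"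
        using a by (simp add: generate.incl)
    qed
  next
    case (incl y) thus ?case using c1 c2 by auto
  next
    case (inv y)
    then have "y \<in> carrier G" using Y by auto
    thus ?case using c1 c2 inv by auto
  next
    case (eng g1 g2)
    have g1: "g1 \<in> carrier G" and g2: "g2 \<in> carrier G"
      using eng(1,3) generate_in_carrier[OF Y] by auto
    show ?case
    proof
      fix a assume a: "a \<in> A"
      have ac: "a \<in> carrier G" using a A by auto
      have e1: "g1 \<otimes> g2 \<otimes> a \<otimes> inv (g1 \<otimes> g2) = g1 \<otimes> (g2 \<otimes> a \<otimes> inv g2) \<otimes> inv g1"
        using g1 g2 ac by (simp add: inv_mult_group m_assoc)
      have e2: "inv (g1 \<otimes> g2) \<otimes> a \<otimes> (g1 \<otimes> g2) = inv g2 \<otimes> (inv g1 \<otimes> a \<otimes> g1) \<otimes> inv (inv g2)"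
        using g1 g2 ac by (simp add: inv_mult_group m_assoc)
      have "g1 \<otimes> (g2 \<otimes> a \<otimes> inv g2) \<otimes> inv g1 \<in> generate G A"
        by (rule conj_closure_gen[OF A g1]) (use eng(2,4) a in auto)
      moreover have "inv g2 \<otimes> (inv g1 \<otimes> a \<otimes> g1) \<otimes> inv (inv g2) \<in> generate G A"
        by (rule conj_closure_gen[OF A]) (use eng(2,4) a g2 in auto)
      ultimately show "g1 \<otimes> g2 \<otimes> a \<otimes> inv (g1 \<otimes> g2) \<in> generate G A \<and>
          inv (g1 \<otimes> g2) \<otimes> a \<otimes> (g1 \<otimes> g2) \<in> generate G A" using e1 e2 by simp
    qed
  qed
  show ?thesis
    unfolding normal_inv_iff
  proof (intro conjI ballI)
    show "subgroup (generate G A) G" by (rule generate_is_subgroup[OF A])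
  next
    fix x h assume x: "x \<in> carrier G" and h: "h \<in> generate G A"
    show "x \<otimes> h \<otimes> inv x \<in> generate G A"
      by (rule conj_closure_gen[OF A x _ h]) (use main x gY in auto)
  qed
qed

lemma nc_normal:
  assumes Y: "Y \<subseteq> carrier G"
  shows "normal_closure G (Y - S) \<lhd> G"
  unfolding normal_closure_def
proof (rule normal_generateI)
  show "(\<Union>g\<in>carrier G. (\<lambda>a. inv g \<otimes> a \<otimes> g) ` (Y - S)) \<subseteq> carrier G"
    using Y by auto
next
  fix h g assume h: "h \<in> (\<Union>g\<in>carrier G. (\<lambda>a. inv g \<otimes> a \<otimes> g) ` (Y - S))" and g: "g \<in> carrier G"
  then obtain k a where k: "k \<in> carrier G" and a: "a \<in> Y - S" and hk: "h = inv k \<otimes> a \<otimes> k" by auto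
  have ac: "a \<in> carrier G" using a Y by auto
  have "g \<otimes> h \<otimes> inv g = inv (k \<otimes> inv g) \<otimes> a \<otimes> (k \<otimes> inv g)"
    using hk k g ac by (simp add: inv_mult_group m_assoc)
  thus "g \<otimes> h \<otimes> inv g \<in> (\<Union>g\<in>carrier G. (\<lambda>a. inv g \<otimes> a \<otimes> g) ` (Y - S))"
    using k g a by auto
qed

lemma nc_incl:
  assumes Y: "Y \<subseteq> carrier G" and x: "x \<in> Y - S"
  shows "x \<in> normal_closure G (Y - S)"
proof -
  have "x = inv \<one> \<otimes> x \<otimes> \<one>" using x Y by auto
  hence "x \<in> (\<Union>g\<in>carrier G. (\<lambda>a. inv g \<otimes> a \<otimes> g) ` (Y - S))" using x by force
  thus ?thesis unfolding normal_closure_def by (rule generate.incl)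
qed

lemma monic_carrier:
  assumes Y: "Y \<subseteq> carrier G" and q: "q \<in> monic_comm G Y"
  shows "q \<in> carrier G"
  using q by induct (use Y in \<open>auto simp: commutator_def\<close>)

lemma monic_dich:
  assumes Y: "Y \<subseteq> carrier G" and q: "q \<in> monic_comm G Y" and SY: "S \<subseteq> Y"
  shows "q \<in> generate G S \<or> q \<in> normal_closure G (Y - S)"
  using q
proof induct
  case (gen x) thus ?case using nc_incl[OF Y, of x S] by (auto intro: generate.incl)
next
  case (gen_inv x)
  have N: "normal_closure G (Y - S) \<lhd> G" by (rule nc_normal[OF Y])
  show ?case
  proof (cases "x \<in> S")
    case True thus ?thesis by (auto intro: generate.inv)
  next
    case False
    hence "x \<in> normal_closure G (Y - S)" using nc_incl[OF Y, of x S] gen_inv by auto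
    thus ?thesis using N normal.axioms(1) subgroup.m_inv_closed by fastforce
  qed
next
  case (comm x y)
  have N: "normal_closure G (Y - S) \<lhd> G" by (rule nc_normal[OF Y])
  have xc: "x \<in> carrier G" and yc: "y \<in> carrier G" using comm monic_carrier[OF Y] by auto
  have SG: "S \<inter> carrier G \<subseteq> carrier G" by auto
  show ?case
  proof (cases "x \<in> normal_closure G (Y - S)")
    case True
    have "inv x \<in> normal_closure G (Y - S)" using True N normal.axioms(1) subgroup.m_inv_closed by fastforce
    moreover have "inv y \<otimes> x \<otimes> inv (inv y) \<in> normal_closure G (Y - S)"
      using True N yc normal_invE(2) by blast
    ultimately have "inv x \<otimes> (inv y \<otimes> x \<otimes> y) \<in> normal_closure G (Y - S)"
      using N normal.axioms(1) subgroup.m_closed yc by fastforce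
    thus ?thesis unfolding commutator_def using xc yc by (simp add: m_assoc)
  next
    case xF: False
    show ?thesis
    proof (cases "y \<in> normal_closure G (Y - S)")
      case True
      have "inv x \<otimes> inv y \<otimes> inv (inv x) \<in> normal_closure G (Y - S)"
        using True N xc normal_invE(2) normal.axioms(1) subgroup.m_inv_closed by (metis inv_closed)
      hence "inv x \<otimes> inv y \<otimes> x \<otimes> y \<in> normal_closure G (Y - S)"
        using True N normal.axioms(1) subgroup.m_closed xc by fastforce
      thus ?thesis unfolding commutator_def by simp
    next
      case False
      hence xg: "x \<in> generate G S" and yg: "y \<in> generate G S" using xF comm by auto
      have sub: "subgroup (generate G S) G" using SY Y generate_is_subgroup by blast
      have "inv x \<otimes> inv y \<otimes> x \<otimes> y \<in> generate G S"
        using xg yg sub by (simp add: subgroup.m_closed subgroup.m_inv_closed)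
      thus ?thesis unfolding commutator_def by simp
    qed
  qed
qed


lemma rho_one_iff:
  assumes Y: "Y \<subseteq> carrier G" and g: "g \<in> carrier G"
  shows "rhoS G Y S g = \<one>\<^bsub>quotS G Y S\<^esub> \<longleftrightarrow> g \<in> normal_closure G (Y - S)"
proof -
  have sub: "subgroup (normal_closure G (Y - S)) G" using nc_normal[OF Y] normal.axioms(1) by blast
  show ?thesis unfolding rhoS_def quotS_def one_FactGroup
    using coset_join1[OF _ g sub] coset_join2[OF g sub] by blast
qed

lemma kernel_char:
  assumes Y: "Y \<subseteq> carrier G"
  shows "kernel G (product_group F (quotS G Y)) (rho_family G Y F)
       = {g \<in> carrier G. \<forall>S\<in>F. g \<in> normal_closure G (Y - S)}"
proof -
  have "(rho_family G Y F g = \<one>\<^bsub>product_group F (quotS G Y)\<^esub>) \<longleftrightarrow>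
        (\<forall>S\<in>F. rhoS G Y S g = \<one>\<^bsub>quotS G Y S\<^esub>)" for g
  proof
    assume "rho_family G Y F g = \<one>\<^bsub>product_group F (quotS G Y)\<^esub>"
    then have e: "(\<lambda>S\<in>F. rhoS G Y S g) = (\<lambda>S\<in>F. \<one>\<^bsub>quotS G Y S\<^esub>)"
      unfolding rho_family_def one_product_group .
    show "\<forall>S\<in>F. rhoS G Y S g = \<one>\<^bsub>quotS G Y S\<^esub>"
    proof
      fix S assume "S \<in> F"
      then show "rhoS G Y S g = \<one>\<^bsub>quotS G Y S\<^esub>" using fun_cong[OF e, of S] by simp
    qed
  next
    assume "\<forall>S\<in>F. rhoS G Y S g = \<one>\<^bsub>quotS G Y S\<^esub>"
    then show "rho_family G Y F g = \<one>\<^bsub>product_group F (quotS G Y)\<^esub>"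
      unfolding rho_family_def one_product_group by (intro restrict_ext) simp
  qed
  thus ?thesis unfolding kernel_def using rho_one_iff[OF Y] by auto
qed

lemma K_normal:
  assumes Y: "Y \<subseteq> carrier G"
  shows "{g \<in> carrier G. \<forall>S\<in>F. g \<in> normal_closure G (Y - S)} \<lhd> G"
proof -
  have N: "\<And>S. normal_closure G (Y - S) \<lhd> G" by (rule nc_normal[OF Y])
  have sub: "\<And>S. subgroup (normal_closure G (Y - S)) G" using N normal.axioms(1) by blast
  have "subgroup {g \<in> carrier G. \<forall>S\<in>F. g \<in> normal_closure G (Y - S)} G"
  proof (rule subgroupI)
    show "{g \<in> carrier G. \<forall>S\<in>F. g \<in> normal_closure G (Y - S)} \<noteq> {}"
      using sub subgroup.one_closed by blast
  qed (auto simp: sub subgroup.m_inv_closed subgroup.m_closed)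
  moreover have "\<forall>x\<in>carrier G. \<forall>h\<in>{g \<in> carrier G. \<forall>S\<in>F. g \<in> normal_closure G (Y - S)}.
      x \<otimes> h \<otimes> inv x \<in> {g \<in> carrier G. \<forall>S\<in>F. g \<in> normal_closure G (Y - S)}"
    using N normal_invE(2) by auto
  ultimately show ?thesis unfolding normal_inv_iff by blast
qed


lemma retr_triv:
  assumes Y: "Y \<subseteq> carrier G" and ret: "retractive G Y T"
    and h: "h \<in> generate G T" and hN: "h \<in> normal_closure G (Y - T)"
  shows "h = \<one>"
proof (cases "T = {}")
  case True thus ?thesis using h generate_empty by auto
next
  case False
  hence inj: "inj_on (rhoS G Y T) (generate G T)" using ret unfolding retractive_def by auto
  have TY: "T \<subseteq> Y" using ret unfolding retractive_def by auto
  have hc: "h \<in> carrier G" using generate_incl[of T] TY Y h by blast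
  have sub: "subgroup (normal_closure G (Y - T)) G" using nc_normal[OF Y] normal.axioms(1) by blast
  have "rhoS G Y T h = rhoS G Y T \<one>"
    using rho_one_iff[OF Y hc, of T] rho_one_iff[OF Y one_closed, of T] hN subgroup.one_closed[OF sub]
    by simp
  thus ?thesis using inj h generate.one by (auto dest: inj_onD)
qed

lemma main_ind:
  assumes Y: "Y \<subseteq> carrier G" and gY: "generate G Y = carrier G"
    and fin: "finite F" and ret: "\<forall>S\<in>F. retractive G Y S"
  shows "{g\<in>carrier G. \<forall>S\<in>F. g \<in> normal_closure G (Y - S)}
     \<subseteq> generate G (monic_comm G Y \<inter> {g\<in>carrier G. \<forall>S\<in>F. g \<in> normal_closure G (Y - S)})"
  using fin ret
proof (induct F rule: finite_induct)
  case empty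
  have "carrier G = generate G Y" using gY by simp
  also have "\<dots> \<subseteq> generate G (monic_comm G Y)" by (rule mono_generate) (auto intro: monic_comm.gen)
  also have "monic_comm G Y = monic_comm G Y \<inter> {g\<in>carrier G. \<forall>S\<in>{}. g \<in> normal_closure G (Y - S)}"
    using monic_carrier[OF Y] by auto
  finally show ?case by simp
next
  case (insert T F)
  define K where "K = {g\<in>carrier G. \<forall>S\<in>insert T F. g \<in> normal_closure G (Y - S)}"
  define K' where "K' = {g\<in>carrier G. \<forall>S\<in>F. g \<in> normal_closure G (Y - S)}"
  define M where "M = monic_comm G Y"
  define L where "L = generate G (M \<inter> K)"
  have IH: "K' \<subseteq> generate G (M \<inter> K')" using insert unfolding K'_def M_def by auto
  have retT: "retractive G Y T" using insert by auto
  hence TY: "T \<subseteq> Y" unfolding retractive_def by auto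
  have Mc: "M \<subseteq> carrier G" using monic_carrier[OF Y] M_def by auto
  have KN: "K \<lhd> G" unfolding K_def by (rule K_normal[OF Y])
  have KS: "subgroup K G" using KN normal.axioms(1) by blast
  have MKc: "M \<inter> K \<subseteq> carrier G" using Mc by auto
  have LN: "L \<lhd> G" unfolding L_def
  proof (rule conj_gen_normal[OF MKc Y gY])
    fix y a assume y: "y \<in> Y" and a: "a \<in> M \<inter> K"
    have yc: "y \<in> carrier G" using y Y by auto
    have ac: "a \<in> carrier G" using a Mc by auto
    have cM: "commutator G a (inv y) \<in> M" using a y by (auto simp: M_def intro: monic_comm.comm monic_comm.gen_inv)
    have cK: "commutator G a (inv y) \<in> K"
    proof -
      have "inv a \<in> K" using a KS subgroup.m_inv_closed by fastforce
      moreover have "y \<otimes> a \<otimes> inv y \<in> K" using a yc KN normal_invE(2) by blast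
      ultimately have "inv a \<otimes> (y \<otimes> a \<otimes> inv y) \<in> K" using KS subgroup.m_closed by fastforce
      thus ?thesis unfolding commutator_def using ac yc by (simp add: m_assoc)
    qed
    have "y \<otimes> a \<otimes> inv y = a \<otimes> commutator G a (inv y)" unfolding commutator_def using ac yc
      by (simp add: m_assoc[symmetric])
    thus "y \<otimes> a \<otimes> inv y \<in> generate G (M \<inter> K)" using cM cK a by (auto intro: generate.incl generate.eng)
  next
    fix y a assume y: "y \<in> Y" and a: "a \<in> M \<inter> K"
    have yc: "y \<in> carrier G" using y Y by auto
    have ac: "a \<in> carrier G" using a Mc by auto
    have cM: "commutator G a y \<in> M" using a y by (auto simp: M_def intro: monic_comm.comm monic_comm.gen)
    have cK: "commutator G a y \<in> K"
    proof -
      have "inv a \<in> K" using a KS subgroup.m_inv_closed by fastforce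
      moreover have "inv y \<otimes> a \<otimes> inv (inv y) \<in> K" using a yc KN normal_invE(2) by blast
      ultimately have "inv a \<otimes> (inv y \<otimes> a \<otimes> y) \<in> K" using KS subgroup.m_closed yc by fastforce
      thus ?thesis unfolding commutator_def using ac yc by (simp add: m_assoc)
    qed
    have "inv y \<otimes> a \<otimes> y = a \<otimes> commutator G a y" unfolding commutator_def using ac yc
      by (simp add: m_assoc[symmetric])
    thus "inv y \<otimes> a \<otimes> y \<in> generate G (M \<inter> K)" using cM cK a by (auto intro: generate.incl generate.eng)
  qed
  have LK: "L \<subseteq> K" unfolding L_def using generate_subgroup_incl[of "M\<inter>K" K] KS by blast
  have Lc: "L \<subseteq> carrier G" using LK K_def by auto
  have LS: "subgroup L G" using LN normal.axioms(1) by blast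
  have Tc: "generate G T \<subseteq> carrier G" using generate_incl TY Y by blast
  have TS: "subgroup (generate G T) G" using generate_is_subgroup TY Y by blast
  have one_L: "\<one> \<in> L" unfolding L_def by (rule generate.one)
  have one_T: "\<one> \<in> generate G T" by (rule generate.one)
  have dec: "\<exists>l\<in>L. \<exists>h\<in>generate G T. g = l \<otimes> h" if g: "g \<in> generate G (M \<inter> K')" for g
    using g
  proof (induct g rule: generate.induct)
    case one
    show ?case using one_L one_T by force
  next
    case (incl m)
    hence mM: "m \<in> monic_comm G Y" and mK': "m \<in> K'" by (auto simp: M_def)
    have mc: "m \<in> carrier G" using mM Mc unfolding M_def by blast
    from monic_dich[OF Y mM TY] show ?case
    proof
      assume "m \<in> generate G T"
      thus ?thesis using mc one_L by force
    next
      assume "m \<in> normal_closure G (Y - T)"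
      hence "m \<in> M \<inter> K" using mK' mM unfolding K_def K'_def M_def by auto
      hence "m \<in> L" unfolding L_def by (rule generate.incl)
      thus ?thesis using mc one_T by force
    qed
  next
    case (inv m)
    hence mM: "m \<in> monic_comm G Y" and mK': "m \<in> K'" by (auto simp: M_def)
    have "m \<in> carrier G" using mM Mc unfolding M_def by blast
    hence mc: "inv m \<in> carrier G" by (rule inv_closed)
    from monic_dich[OF Y mM TY] show ?case
    proof
      assume "m \<in> generate G T"
      hence "inv m \<in> generate G T" by (rule subgroup.m_inv_closed[OF TS])
      thus ?thesis using mc one_L by force
    next
      assume "m \<in> normal_closure G (Y - T)"
      hence "m \<in> M \<inter> K" using mK' mM unfolding K_def K'_def M_def by auto
      hence "inv m \<in> L" unfolding L_def by (rule generate.inv)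
      thus ?thesis using mc one_T by force
    qed
  next
    case (eng g1 g2)
    obtain l1 h1 where l1: "l1 \<in> L" and h1: "h1 \<in> generate G T" and e1: "g1 = l1 \<otimes> h1" using eng(2) by blast
    obtain l2 h2 where l2: "l2 \<in> L" and h2: "h2 \<in> generate G T" and e2: "g2 = l2 \<otimes> h2" using eng(4) by blast
    have c: "l1 \<in> carrier G" "l2 \<in> carrier G" "h1 \<in> carrier G" "h2 \<in> carrier G"
      using l1 l2 h1 h2 Lc Tc by auto
    have "h1 \<otimes> l2 \<otimes> inv h1 \<in> L" by (rule normal_invE(2)[OF LN c(3) l2])
    hence "l1 \<otimes> (h1 \<otimes> l2 \<otimes> inv h1) \<in> L" by (rule subgroup.m_closed[OF LS l1])
    moreover have "h1 \<otimes> h2 \<in> generate G T" by (rule subgroup.m_closed[OF TS h1 h2])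
    moreover have "g1 \<otimes> g2 = l1 \<otimes> (h1 \<otimes> l2 \<otimes> inv h1) \<otimes> (h1 \<otimes> h2)"
      using c e1 e2 by (simp add: m_assoc, simp add: m_assoc[symmetric])
    ultimately show ?case by blast
  qed
  have "K \<subseteq> L"
  proof
    fix g assume gK: "g \<in> K"
    then have "g \<in> K'" unfolding K_def K'_def by auto
    with IH have "g \<in> generate G (M \<inter> K')" by auto
    then obtain l h where l: "l \<in> L" and h: "h \<in> generate G T" and e: "g = l \<otimes> h" using dec by blast
    have lc: "l \<in> carrier G" and hc: "h \<in> carrier G" using l h Lc Tc by auto
    have eh: "inv l \<otimes> g = h" using e lc hc by (simp add: m_assoc[symmetric])
    have "l \<in> K" using l LK by auto
    hence "inv l \<in> K" by (rule subgroup.m_inv_closed[OF KS])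
    hence "inv l \<otimes> g \<in> K" using gK by (rule subgroup.m_closed[OF KS])
    hence hN: "h \<in> normal_closure G (Y - T)" using eh unfolding K_def by auto
    have "h = \<one>" by (rule retr_triv[OF Y retT h hN])
    thus "g \<in> L" using e lc l by simp
  qed
  thus ?case unfolding K_def L_def M_def .
qed

end

theorem mainTheorem6:
  fixes G :: "('a, 'b) monoid_scheme" and Y :: "'a set" and F :: "'a set set"
  assumes "group G"
    and "finite Y" and "Y \<subseteq> carrier G" and "generate G Y = carrier G"
    and "retractive_family G Y F"
  shows "kernel G (product_group F (quotS G Y)) (rho_family G Y F)
           = generate G {q \<in> monic_comm G Y. transverse F (support G Y F q)}"
proof -
  interpret group G by fact
  note Y = assms(3) and gY = assms(4)
  have ret: "\<forall>S\<in>F. retractive G Y S" using assms(5) unfolding retractive_family_def by auto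
  have "F \<subseteq> Pow Y" using ret unfolding retractive_def by auto
  hence fin: "finite F" using assms(2) finite_subset by blast
  define K where "K = {g\<in>carrier G. \<forall>S\<in>F. g \<in> normal_closure G (Y - S)}"
  define M where "M = monic_comm G Y"
  define Tr where "Tr = {q \<in> monic_comm G Y. transverse F (support G Y F q)}"
  have kern: "kernel G (product_group F (quotS G Y)) (rho_family G Y F) = K"
    unfolding K_def by (rule kernel_char[OF Y])
  have KS: "subgroup K G" using K_normal[OF Y] normal.axioms(1) unfolding K_def by blast
  have Mc: "M \<subseteq> carrier G" using monic_carrier[OF Y] M_def by auto
  have TrK: "Tr \<subseteq> K"
  proof
    fix q assume q: "q \<in> Tr"
    hence qM: "q \<in> monic_comm G Y" and tr: "transverse F (support G Y F q)" unfolding Tr_def by auto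
    have "q \<in> normal_closure G (Y - S)" if S: "S \<in> F" for S
    proof -
      have SY: "S \<subseteq> Y" using ret S unfolding retractive_def by auto
      have "q \<notin> generate G S"
      proof
        assume "q \<in> generate G S"
        hence "support G Y F q \<subseteq> S" unfolding support_def using S by auto
        thus False using tr S unfolding transverse_def by auto
      qed
      thus ?thesis using monic_dich[OF Y qM SY] by auto
    qed
    thus "q \<in> K" unfolding K_def using monic_carrier[OF Y qM] by auto
  qed
  have MK: "M \<inter> K \<subseteq> generate G Tr"
  proof
    fix q assume q: "q \<in> M \<inter> K"
    show "q \<in> generate G Tr"
    proof (cases "q = \<one>\<^bsub>G\<^esub>")
      case True thus ?thesis by (simp add: generate.one)
    next
      case False
      have qc: "q \<in> carrier G" using q Mc by auto
      have ng: "q \<notin> generate G S" if S: "S \<in> F" for S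
      proof
        assume "q \<in> generate G S"
        moreover have "q \<in> normal_closure G (Y - S)" using q S unfolding K_def by auto
        ultimately have "q = \<one>\<^bsub>G\<^esub>" using retr_triv[OF Y] ret S by blast
        thus False using False by simp
      qed
      hence sY: "support G Y F q = Y" unfolding support_def by auto
      have "transverse F (support G Y F q)"
        unfolding transverse_def sY
      proof (intro ballI notI)
        fix S assume S: "S \<in> F" and YS: "Y \<subseteq> S"
        have "generate G Y \<subseteq> generate G S" by (rule mono_generate[OF YS])
        hence "q \<in> generate G S" using gY qc by auto
        thus False using ng S by blast
      qed
      hence "q \<in> Tr" using q unfolding Tr_def M_def by auto
      thus ?thesis by (rule generate.incl)
    qed
  qed
  have Trc: "Tr \<subseteq> carrier G" using TrK K_def by auto
  have "K \<subseteq> generate G (M \<inter> K)" unfolding K_def M_def by (rule main_ind[OF Y gY fin ret])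
  also have "\<dots> \<subseteq> generate G Tr" by (rule generate_subgroup_incl[OF MK generate_is_subgroup[OF Trc]])
  finally have "K \<subseteq> generate G Tr" .
  moreover have "generate G Tr \<subseteq> K" by (rule generate_subgroup_incl[OF TrK KS])
  ultimately show ?thesis using kern unfolding Tr_def by blast
qed

end
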